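(* Under the standing assumptions below, for every $k\ge d+1$ and every $x\in W$, $$\lim_{r\to0^+}p_k(x,r)=p_k.$$
   Context: Standing assumptions: $\mu$ is an absolutely continuous measure on $\mathbb{R}^d$ with continuous density $f:\mathbb{R}^d\to[0,\infty)$; $W\subset\mathbb{R}^d$ is compact and convex with $f>0$ on $W$. $\mathbf{B}(x,r)$ is the open Euclidean ball. For a finite counting measure $\nu$ and $x\in\mathbb{R}^d$, $N(x,\nu)=\{y:\|x-y\|\le\|y-x'\|\text{ for all }x'\in\nu,\ x'\ne x\}$ is the Voronoi cell of $x$ generated by $\nu+\delta_x$. For $x\in W$ and $r>0$, let $X_1^{(x,r)},X_2^{(x,r)},\dots$ be i.i.d. random points in $\mathbb{R}^d$ with $\mathbb{P}(X_i^{(x,r)}\in E)=\mu(\mathbf{B}(x,2r)\cap E)/\mu(\mathbf{B}(x,2r))$, and set $p_k(x,r)=\mathbb{P}\big(N(x,\sum_{j=1}^k\delta_{X_j^{(x,r)}})\subseteq\mathbf{B}(x,r)\big)$. Also $p_k=\mathbb{P}\big(N(0,\sum_{j=1}^k\delta_{Y_j})\subseteq\mathbf{B}(0,1)\big)$ with $Y_1,\dots,Y_k$ independent and uniformly distributed in $\mathbf{B}(0,2)$. *)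

theory Defs
  imports "HOL-Probability.Probability"
begin

text \<open>Voronoi cell of x generated by the point configuration S together with x
  (multiplicities of a counting measure are irrelevant for the cell).\<close>
definition voronoi_cell :: "'a::euclidean_space \<Rightarrow> 'a set \<Rightarrow> 'a set" where
  "voronoi_cell x S = {y. \<forall>x'\<in>S. x' \<noteq> x \<longrightarrow> norm (x - y) \<le> norm (y - x')}"

definition pk_xr :: "'a::euclidean_space measure \<Rightarrow> 'a \<Rightarrow> real \<Rightarrow> nat \<Rightarrow> real" where
  "pk_xr mu x r k =
     measure (PiM {..<k} (\<lambda>_. uniform_measure mu (ball x (2*r))))
       {ys \<in> space (PiM {..<k} (\<lambda>_. uniform_measure mu (ball x (2*r)))).
          voronoi_cell x (ys ` {..<k}) \<subseteq> ball x r}"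

definition pk :: "nat \<Rightarrow> 'a::euclidean_space itself \<Rightarrow> real" where
  "pk k _ =
     measure (PiM {..<k} (\<lambda>_. uniform_measure (lborel :: 'a measure) (ball 0 2)))
       {ys \<in> space (PiM {..<k} (\<lambda>_. uniform_measure (lborel :: 'a measure) (ball 0 2))).
          voronoi_cell (0::'a) (ys ` {..<k}) \<subseteq> ball 0 1}"

end

theory Submission imports Defs begin

lemma PiM_density:
  fixes N :: "'a measure" and g :: "'a \<Rightarrow> ennreal"
  assumes "finite I" "prob_space N" "prob_space (density N g)"
    and g[measurable]: "g \<in> borel_measurable N"
  shows "PiM I (\<lambda>_. density N g) = density (PiM I (\<lambda>_. N)) (\<lambda>\<omega>. \<Prod>i\<in>I. g (\<omega> i))"
proof -
  interpret D: product_prob_space "\<lambda>_. density N g" I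
    unfolding product_prob_space_def product_prob_space_axioms_def product_sigma_finite_def
    using assms by (auto intro: prob_space_imp_sigma_finite)
  interpret NN: product_prob_space "\<lambda>_. N" I
    unfolding product_prob_space_def product_prob_space_axioms_def product_sigma_finite_def
    using assms by (auto intro: prob_space_imp_sigma_finite)
  have sets_eq: "sets (PiM I (\<lambda>_. density N g)) = sets (PiM I (\<lambda>_. N))"
    by (rule sets_PiM_cong) auto
  show ?thesis
  proof (rule D.PiM_eqI[symmetric])
    show "finite I" by fact
    show "sets (density (PiM I (\<lambda>_. N)) (\<lambda>\<omega>. \<Prod>i\<in>I. g (\<omega> i))) = sets (PiM I (\<lambda>_. density N g))"
      using sets_eq by simp
    fix A assume A: "\<And>i. i \<in> I \<Longrightarrow> A i \<in> sets (density N g)"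
    then have A': "\<And>i. i \<in> I \<Longrightarrow> A i \<in> sets N" by simp
    have meas: "(\<lambda>\<omega>. \<Prod>i\<in>I. g (\<omega> i)) \<in> borel_measurable (PiM I (\<lambda>_. N))"
      by measurable
    have "PiE I A \<in> sets (PiM I (\<lambda>_. N))" using A' by (intro sets_PiM_I_finite) (auto simp: assms)
    then have "emeasure (density (PiM I (\<lambda>_. N)) (\<lambda>\<omega>. \<Prod>i\<in>I. g (\<omega> i))) (PiE I A)
        = (\<integral>\<^sup>+\<omega>. (\<Prod>i\<in>I. g (\<omega> i)) * indicator (PiE I A) \<omega> \<partial>PiM I (\<lambda>_. N))"
      using meas by (simp add: emeasure_density)
    also have "\<dots> = (\<integral>\<^sup>+\<omega>. (\<Prod>i\<in>I. g (\<omega> i) * indicator (A i) (\<omega> i)) \<partial>PiM I (\<lambda>_. N))"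
    proof (rule nn_integral_cong)
      fix \<omega> assume "\<omega> \<in> space (PiM I (\<lambda>_. N))"
      then have "\<omega> \<in> extensional I" by (simp add: space_PiM PiE_def)
      then show "(\<Prod>i\<in>I. g (\<omega> i)) * indicator (PiE I A) \<omega> = (\<Prod>i\<in>I. g (\<omega> i) * indicator (A i) (\<omega> i))"
        by (auto simp: prod.distrib indicator_def PiE_def Pi_def assms prod_zero_iff)
    qed
    also have "\<dots> = (\<Prod>i\<in>I. \<integral>\<^sup>+y. g y * indicator (A i) y \<partial>N)"
      using A' by (intro NN.product_nn_integral_prod) (auto simp: assms)
    also have "\<dots> = (\<Prod>i\<in>I. emeasure (density N g) (A i))"
      using A' by (intro prod.cong) (auto simp: emeasure_density)
    finally show "emeasure (density (PiM I (\<lambda>_. N)) (\<lambda>\<omega>. \<Prod>i\<in>I. g (\<omega> i))) (PiE I A) = (\<Prod>i\<in>I. emeasure (density N g) (A i))" .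
  qed
qed

lemma PiM_density_le:
  fixes N :: "'a measure" and g :: "'a \<Rightarrow> ennreal"
  assumes "finite I" "prob_space N" "prob_space (density N g)"
    and g[measurable]: "g \<in> borel_measurable N" and c: "\<And>y. g y \<le> ennreal c" "c \<ge> 0"
    and A: "A \<in> sets (PiM I (\<lambda>_. N))"
  shows "emeasure (PiM I (\<lambda>_. density N g)) A \<le> ennreal (c ^ card I) * emeasure (PiM I (\<lambda>_. N)) A"
proof -
  have meas: "(\<lambda>\<omega>. \<Prod>i\<in>I. g (\<omega> i)) \<in> borel_measurable (PiM I (\<lambda>_. N))"
    by measurable
  have "emeasure (PiM I (\<lambda>_. density N g)) A
      = (\<integral>\<^sup>+\<omega>. (\<Prod>i\<in>I. g (\<omega> i)) * indicator A \<omega> \<partial>PiM I (\<lambda>_. N))"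
    using meas A by (simp add: PiM_density[OF assms(1-4)] emeasure_density)
  also have "\<dots> \<le> (\<integral>\<^sup>+\<omega>. ennreal (c ^ card I) * indicator A \<omega> \<partial>PiM I (\<lambda>_. N))"
  proof (rule nn_integral_mono)
    fix \<omega>
    have "(\<Prod>i\<in>I. g (\<omega> i)) \<le> (\<Prod>i\<in>I. ennreal c)"
      by (rule prod_mono_ennreal) (auto simp: c)
    also have "\<dots> = ennreal (c ^ card I)" using c by (simp add: prod_ennreal ennreal_power)
    finally show "(\<Prod>i\<in>I. g (\<omega> i)) * indicator A \<omega> \<le> ennreal (c ^ card I) * indicator A \<omega>"
      by (auto intro: mult_right_mono)
  qed
  also have "\<dots> = ennreal (c ^ card I) * emeasure (PiM I (\<lambda>_. N)) A"
    using A by (simp add: nn_integral_cmult_indicator)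
  finally show ?thesis .
qed

lemma lborel_affine_emeasure:
  fixes x :: "'a::euclidean_space"
  assumes r: "r > 0" and C: "C \<in> sets borel"
  shows "emeasure lborel C = ennreal (r ^ DIM('a)) * emeasure lborel ((\<lambda>z. x + r *\<^sub>R z) -` C)"
proof -
  have [measurable]: "(\<lambda>z. x + r *\<^sub>R z) \<in> borel \<rightarrow>\<^sub>M borel" by measurable
  have "emeasure lborel C = emeasure (density (distr lborel borel (\<lambda>z. x + r *\<^sub>R z)) (\<lambda>_. \<bar>r\<bar>^DIM('a))) C"
    using lborel_affine[of r x] r by simp
  also have "\<dots> = ennreal (r ^ DIM('a)) * emeasure lborel ((\<lambda>z. x + r *\<^sub>R z) -` C)"
    using C r by (simp add: emeasure_density nn_integral_cmult_indicator emeasure_distr ennreal_power)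
  finally show ?thesis .
qed

lemma uniform_ball_affine:
  fixes x :: "'a::euclidean_space"
  assumes r: "r > 0"
  shows "distr (uniform_measure lborel (ball 0 2)) lborel (\<lambda>z. x + r *\<^sub>R z) = uniform_measure lborel (ball x (2*r))"
proof (rule measure_eqI)
  show "sets (distr (uniform_measure lborel (ball 0 2)) lborel (\<lambda>z. x + r *\<^sub>R z)) = sets (uniform_measure lborel (ball x (2*r)))"
    by simp
  fix A assume "A \<in> sets (distr (uniform_measure lborel (ball 0 2)) lborel (\<lambda>z. x + r *\<^sub>R z))"
  then have A[measurable]: "A \<in> sets borel" by simp
  let ?T = "\<lambda>z::'a. x + r *\<^sub>R z"
  have [measurable]: "?T \<in> uniform_measure lborel (ball 0 2) \<rightarrow>\<^sub>M lborel"
    by measurable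
  have pre1: "?T -` (ball x (2*r) \<inter> A) = ball 0 2 \<inter> ?T -` A"
    using r by (auto simp: dist_norm norm_minus_commute)
  have pre2: "?T -` (ball x (2*r)) = ball (0::'a) 2"
    using r by (auto simp: dist_norm norm_minus_commute)
  have pos: "ennreal (r ^ DIM('a)) \<noteq> 0" "ennreal (r ^ DIM('a)) \<noteq> \<infinity>" using r by auto
  have "emeasure (distr (uniform_measure lborel (ball 0 2)) lborel ?T) A
      = emeasure (uniform_measure lborel (ball 0 2)) (?T -` A \<inter> space (uniform_measure lborel (ball 0 2)))"
    by (rule emeasure_distr) measurable
  also have "\<dots> = emeasure lborel (ball 0 2 \<inter> ?T -` A) / emeasure lborel (ball (0::'a) 2)"
  proof -
    have Tm: "?T \<in> borel \<rightarrow>\<^sub>M borel" by measurable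
    have "?T -` A \<in> sets borel" using measurable_sets[OF Tm A] by simp
    then show ?thesis by simp
  qed
  also have "\<dots> = (emeasure lborel (ball 0 2 \<inter> ?T -` A) * ennreal (r ^ DIM('a)))
       / (emeasure lborel (ball (0::'a) 2) * ennreal (r ^ DIM('a)))"
    using pos by (simp add: divide_mult_eq)
  also have "\<dots> = emeasure lborel (ball x (2*r) \<inter> A) / emeasure lborel (ball x (2*r))"
  proof -
    have m1: "ball x (2*r) \<inter> A \<in> sets borel" by simp
    have m2: "ball x (2*r) \<in> sets borel" by simp
    have e1: "emeasure lborel (ball x (2*r) \<inter> A) = ennreal (r ^ DIM('a)) * emeasure lborel (ball 0 2 \<inter> ?T -` A)"
      using lborel_affine_emeasure[OF r m1, of x] unfolding pre1 .
    have e2: "emeasure lborel (ball x (2*r)) = ennreal (r ^ DIM('a)) * emeasure lborel (ball (0::'a) 2)"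
      using lborel_affine_emeasure[OF r m2, of x] unfolding pre2 .
    show ?thesis unfolding e1 e2 by (simp add: mult.commute)
  qed
  also have "\<dots> = emeasure (uniform_measure lborel (ball x (2*r))) A" by simp
  finally show "emeasure (distr (uniform_measure lborel (ball 0 2)) lborel ?T) A = emeasure (uniform_measure lborel (ball x (2*r))) A" .
qed

lemma emeasure_ball_pos:
  fixes c :: "'a::euclidean_space"
  assumes "\<rho> > 0"
  shows "emeasure lborel (ball c \<rho>) \<noteq> 0" "emeasure lborel (ball c \<rho>) \<noteq> \<infinity>"
proof -
  have "measure lborel (ball c \<rho>) > 0" using content_ball_pos[OF assms] by simp
  moreover have "emeasure lborel (ball c \<rho>) = ennreal (measure lborel (ball c \<rho>))"
    using emeasure_lborel_ball_finite[of c \<rho>] by (simp add: emeasure_eq_ennreal_measure)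
  ultimately show "emeasure lborel (ball c \<rho>) \<noteq> 0" by simp
  show "emeasure lborel (ball c \<rho>) \<noteq> \<infinity>" using emeasure_lborel_ball_finite[of c \<rho>] by simp
qed

lemma prob_space_uniform_ball:
  fixes c :: "'a::euclidean_space"
  assumes "\<rho> > 0"
  shows "prob_space (uniform_measure lborel (ball c \<rho>))"
  using emeasure_ball_pos[OF assms] by (intro prob_space_uniform_measure) auto

lemma PiM_uniform_affine:
  fixes x :: "'a::euclidean_space" and k :: nat
  assumes r: "r > 0"
  defines "U0 \<equiv> uniform_measure lborel (ball (0::'a) 2)"
  defines "Ur \<equiv> uniform_measure lborel (ball x (2*r))"
  defines "T \<equiv> (\<lambda>\<omega>. \<lambda>i\<in>{..<k}. x + r *\<^sub>R \<omega> i)"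
  shows "PiM {..<k} (\<lambda>_. Ur) = distr (PiM {..<k} (\<lambda>_. U0)) (PiM {..<k} (\<lambda>_. Ur)) T"
    and "T \<in> PiM {..<k} (\<lambda>_. U0) \<rightarrow>\<^sub>M PiM {..<k} (\<lambda>_. Ur)"
proof -
  have pU0: "prob_space U0" unfolding U0_def by (rule prob_space_uniform_ball) simp
  have pUr: "prob_space Ur" unfolding Ur_def by (rule prob_space_uniform_ball) (simp add: r)
  interpret R: product_prob_space "\<lambda>_. Ur" "{..<k}"
    unfolding product_prob_space_def product_prob_space_axioms_def product_sigma_finite_def
    using pUr by (auto intro: prob_space_imp_sigma_finite)
  interpret Z: product_prob_space "\<lambda>_. U0" "{..<k}"
    unfolding product_prob_space_def product_prob_space_axioms_def product_sigma_finite_def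
    using pU0 by (auto intro: prob_space_imp_sigma_finite)
  have Ti: "(\<lambda>z::'a. x + r *\<^sub>R z) \<in> U0 \<rightarrow>\<^sub>M Ur"
    unfolding U0_def Ur_def by measurable
  show Tm: "T \<in> PiM {..<k} (\<lambda>_. U0) \<rightarrow>\<^sub>M PiM {..<k} (\<lambda>_. Ur)"
    unfolding T_def
  proof (intro measurable_restrict)
    fix i assume i: "i \<in> {..<k}"
    have "(\<lambda>\<omega>. \<omega> i) \<in> PiM {..<k} (\<lambda>_. U0) \<rightarrow>\<^sub>M U0"
      using measurable_component_singleton[OF i, of "\<lambda>_. U0"] .
    from measurable_compose[OF this Ti]
    show "(\<lambda>\<omega>. x + r *\<^sub>R \<omega> i) \<in> PiM {..<k} (\<lambda>_. U0) \<rightarrow>\<^sub>M Ur" .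
  qed
  show "PiM {..<k} (\<lambda>_. Ur) = distr (PiM {..<k} (\<lambda>_. U0)) (PiM {..<k} (\<lambda>_. Ur)) T"
  proof (rule R.PiM_eqI[symmetric])
    show "finite {..<k}" by simp
    show "sets (distr (PiM {..<k} (\<lambda>_. U0)) (PiM {..<k} (\<lambda>_. Ur)) T) = sets (PiM {..<k} (\<lambda>_. Ur))"
      by simp
    fix A assume A: "\<And>i. i \<in> {..<k} \<Longrightarrow> A i \<in> sets Ur"
    have PA: "PiE {..<k} A \<in> sets (PiM {..<k} (\<lambda>_. Ur))"
      using A by (intro sets_PiM_I_finite) auto
    have pre: "T -` PiE {..<k} A \<inter> space (PiM {..<k} (\<lambda>_. U0))
        = PiE {..<k} (\<lambda>i. (\<lambda>z::'a. x + r *\<^sub>R z) -` A i \<inter> space U0)"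
      unfolding T_def by (auto simp: space_PiM PiE_def Pi_def extensional_def U0_def)
    have "emeasure (distr (PiM {..<k} (\<lambda>_. U0)) (PiM {..<k} (\<lambda>_. Ur)) T) (PiE {..<k} A)
        = emeasure (PiM {..<k} (\<lambda>_. U0)) (T -` PiE {..<k} A \<inter> space (PiM {..<k} (\<lambda>_. U0)))"
      by (rule emeasure_distr[OF Tm PA])
    also have "\<dots> = (\<Prod>i\<in>{..<k}. emeasure U0 ((\<lambda>z::'a. x + r *\<^sub>R z) -` A i \<inter> space U0))"
      unfolding pre using A by (intro Z.emeasure_PiM) (auto intro: measurable_sets[OF Ti])
    also have "\<dots> = (\<Prod>i\<in>{..<k}. emeasure Ur (A i))"
    proof (rule prod.cong)
      fix i assume i: "i \<in> {..<k}"
      have "emeasure U0 ((\<lambda>z::'a. x + r *\<^sub>R z) -` A i \<inter> space U0)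
          = emeasure (distr U0 lborel (\<lambda>z. x + r *\<^sub>R z)) (A i)"
        using A[OF i] Ti by (subst emeasure_distr) (auto simp: Ur_def U0_def)
      also have "\<dots> = emeasure Ur (A i)"
        unfolding U0_def Ur_def uniform_ball_affine[OF r] ..
      finally show "emeasure U0 ((\<lambda>z::'a. x + r *\<^sub>R z) -` A i \<inter> space U0) = emeasure Ur (A i)" .
    qed simp
    finally show "emeasure (distr (PiM {..<k} (\<lambda>_. U0)) (PiM {..<k} (\<lambda>_. Ur)) T) (PiE {..<k} A) = (\<Prod>i\<in>{..<k}. emeasure Ur (A i))" .
  qed
qed

lemma vor_mem:
  fixes x :: "'a::euclidean_space"
  assumes r: "r > 0"
  shows "(x + r *\<^sub>R w \<in> voronoi_cell x ((\<lambda>z. x + r *\<^sub>R z) ` S)) \<longleftrightarrow> (w \<in> voronoi_cell 0 S)"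
proof -
  have eq1: "norm (x - (x + r *\<^sub>R w)) = r * norm w" using r by simp
  have eq2: "\<And>s. norm (x + r *\<^sub>R w - (x + r *\<^sub>R s)) = r * norm (w - s)"
  proof -
    fix s
    have "x + r *\<^sub>R w - (x + r *\<^sub>R s) = r *\<^sub>R (w - s)" by (simp add: algebra_simps)
    then show "norm (x + r *\<^sub>R w - (x + r *\<^sub>R s)) = r * norm (w - s)" using r by simp
  qed
  have eq3: "\<And>s. norm (r *\<^sub>R w - r *\<^sub>R s) = r * norm (w - s)"
    using r by (simp flip: scaleR_diff_right)
  have ne: "\<And>s. (x + r *\<^sub>R s \<noteq> x) \<longleftrightarrow> s \<noteq> 0" using r by simp
  show ?thesis
    unfolding voronoi_cell_def using r
    by (auto simp: eq1 eq2 eq3 ne)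
qed

lemma vor_scale:
  fixes x :: "'a::euclidean_space"
  assumes r: "r > 0"
  shows "(voronoi_cell x ((\<lambda>z. x + r *\<^sub>R z) ` S) \<subseteq> ball x r) \<longleftrightarrow> (voronoi_cell 0 S \<subseteq> ball 0 1)"
proof
  assume H: "voronoi_cell x ((\<lambda>z. x + r *\<^sub>R z) ` S) \<subseteq> ball x r"
  show "voronoi_cell 0 S \<subseteq> ball 0 1"
  proof
    fix w assume "w \<in> voronoi_cell 0 S"
    then have "x + r *\<^sub>R w \<in> ball x r" using H vor_mem[OF r, of x w S] by auto
    then show "w \<in> ball 0 1" using r by (simp add: dist_norm)
  qed
next
  assume H: "voronoi_cell 0 S \<subseteq> ball 0 1"
  show "voronoi_cell x ((\<lambda>z. x + r *\<^sub>R z) ` S) \<subseteq> ball x r"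
  proof
    fix y assume y: "y \<in> voronoi_cell x ((\<lambda>z. x + r *\<^sub>R z) ` S)"
    define w where "w = (1/r) *\<^sub>R (y - x)"
    have yw: "y = x + r *\<^sub>R w" using r by (simp add: w_def)
    have "w \<in> ball 0 1" using H y vor_mem[OF r, of x w S] yw by auto
    then have "norm w < 1" by simp
    then have "norm (r *\<^sub>R w) < r" using r by simp
    then show "y \<in> ball x r" by (simp add: yw dist_norm)
  qed
qed

lemma pk_uniform:
  fixes x :: "'a::euclidean_space" and k :: nat
  assumes r: "r > 0"
  shows "measure (PiM {..<k} (\<lambda>_. uniform_measure lborel (ball x (2*r))))
       {ys \<in> space (PiM {..<k} (\<lambda>_. uniform_measure lborel (ball x (2*r)))).
          voronoi_cell x (ys ` {..<k}) \<subseteq> ball x r} = pk k TYPE('a)"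
proof -
  define U0 where "U0 = uniform_measure lborel (ball (0::'a) 2)"
  define Ur where "Ur = uniform_measure lborel (ball x (2*r))"
  define T where "T = (\<lambda>\<omega>. \<lambda>i\<in>{..<k}. x + r *\<^sub>R \<omega> i)"
  define T' where "T' = (\<lambda>\<omega>. \<lambda>i\<in>{..<k}. (1/r) *\<^sub>R (\<omega> i - x))"
  define S0 where "S0 = PiM {..<k} (\<lambda>_. U0)"
  define Sr where "Sr = PiM {..<k} (\<lambda>_. Ur)"
  define E1 where "E1 = {zs \<in> space S0. voronoi_cell 0 (zs ` {..<k}) \<subseteq> ball 0 1}"
  define Er where "Er = {ys \<in> space Sr. voronoi_cell x (ys ` {..<k}) \<subseteq> ball x r}"
  have eqS: "Sr = distr S0 Sr T" and Tm: "T \<in> S0 \<rightarrow>\<^sub>M Sr"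
    using PiM_uniform_affine[OF r, where x=x and k=k] unfolding S0_def Sr_def T_def U0_def Ur_def by auto
  have Ti': "(\<lambda>z::'a. (1/r) *\<^sub>R (z - x)) \<in> Ur \<rightarrow>\<^sub>M U0"
    unfolding U0_def Ur_def by measurable
  have T'm: "T' \<in> Sr \<rightarrow>\<^sub>M S0"
    unfolding T'_def Sr_def S0_def
  proof (intro measurable_restrict)
    fix i assume i: "i \<in> {..<k}"
    have "(\<lambda>\<omega>. \<omega> i) \<in> PiM {..<k} (\<lambda>_. Ur) \<rightarrow>\<^sub>M Ur"
      using measurable_component_singleton[OF i, of "\<lambda>_. Ur"] .
    from measurable_compose[OF this Ti']
    show "(\<lambda>\<omega>. (1/r) *\<^sub>R (\<omega> i - x)) \<in> PiM {..<k} (\<lambda>_. Ur) \<rightarrow>\<^sub>M U0" .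
  qed
  have spS0: "space S0 = PiE {..<k} (\<lambda>_. UNIV)" by (simp add: S0_def U0_def space_PiM)
  have spSr: "space Sr = PiE {..<k} (\<lambda>_. UNIV)" by (simp add: Sr_def Ur_def space_PiM)
  have img: "(T \<omega>) ` {..<k} = (\<lambda>z. x + r *\<^sub>R z) ` (\<omega> ` {..<k})" for \<omega>
    unfolding T_def by auto
  have img': "\<omega> ` {..<k} = (\<lambda>z. x + r *\<^sub>R z) ` ((T' \<omega>) ` {..<k})" for \<omega>
  proof -
    have "(\<lambda>z. x + r *\<^sub>R z) ` ((T' \<omega>) ` {..<k}) = (\<lambda>i. x + r *\<^sub>R ((1/r) *\<^sub>R (\<omega> i - x))) ` {..<k}"
      unfolding T'_def by (auto simp: image_image)
    also have "\<dots> = \<omega> ` {..<k}" using r by simp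
    finally show ?thesis by simp
  qed
  have Tsp: "T \<omega> \<in> space Sr" for \<omega> unfolding spSr T_def by auto
  have T'sp: "T' \<omega> \<in> space S0" for \<omega> unfolding spS0 T'_def by auto
  have pre1: "T -` Er \<inter> space S0 = E1"
  proof (intro set_eqI iffI)
    fix \<omega> assume "\<omega> \<in> T -` Er \<inter> space S0"
    then have "voronoi_cell x ((T \<omega>) ` {..<k}) \<subseteq> ball x r" "\<omega> \<in> space S0" unfolding Er_def by auto
    then show "\<omega> \<in> E1" unfolding E1_def img vor_scale[OF r] by simp
  next
    fix \<omega> assume "\<omega> \<in> E1"
    then have "voronoi_cell 0 (\<omega> ` {..<k}) \<subseteq> ball 0 1" "\<omega> \<in> space S0" unfolding E1_def by auto
    then show "\<omega> \<in> T -` Er \<inter> space S0" unfolding Er_def using Tsp[of \<omega>] by (simp add: img vor_scale[OF r])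
  qed
  have pre2: "T' -` E1 \<inter> space Sr = Er"
  proof (intro set_eqI iffI)
    fix \<omega> assume "\<omega> \<in> T' -` E1 \<inter> space Sr"
    then have "voronoi_cell 0 ((T' \<omega>) ` {..<k}) \<subseteq> ball 0 1" "\<omega> \<in> space Sr" unfolding E1_def by auto
    then show "\<omega> \<in> Er" unfolding Er_def using vor_scale[OF r, of x "(T' \<omega>) ` {..<k}"] img'[of \<omega>] by simp
  next
    fix \<omega> assume "\<omega> \<in> Er"
    then have "voronoi_cell x (\<omega> ` {..<k}) \<subseteq> ball x r" "\<omega> \<in> space Sr" unfolding Er_def by auto
    then show "\<omega> \<in> T' -` E1 \<inter> space Sr" unfolding E1_def using T'sp[of \<omega>]
      vor_scale[OF r, of x "(T' \<omega>) ` {..<k}"] img'[of \<omega>] by simp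
  qed
  have "measure Sr Er = measure S0 E1"
  proof (cases "Er \<in> sets Sr")
    case True
    have "measure Sr Er = measure (distr S0 Sr T) Er" using eqS by simp
    also have "\<dots> = measure S0 (T -` Er \<inter> space S0)" by (rule measure_distr[OF Tm True])
    finally show ?thesis using pre1 by simp
  next
    case False
    have "E1 \<notin> sets S0"
    proof
      assume "E1 \<in> sets S0"
      then have "T' -` E1 \<inter> space Sr \<in> sets Sr" using measurable_sets[OF T'm] by blast
      then show False using False pre2 by simp
    qed
    then show ?thesis using False by (simp add: measure_notin_sets)
  qed
  then show ?thesis unfolding Er_def E1_def Sr_def S0_def Ur_def U0_def pk_def by simp
qed

lemma compare_PiM:
  fixes P U :: "'a measure" and k :: nat
  assumes pP: "prob_space P" and pU: "prob_space U"
    and P: "P = density U g" and U: "U = density P g2"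
    and g[measurable]: "g \<in> borel_measurable U" and g2[measurable]: "g2 \<in> borel_measurable P"
    and gc: "\<And>y. g y \<le> ennreal c" and g2c: "\<And>y. g2 y \<le> ennreal c" and c: "c \<ge> 1"
  shows "\<bar>measure (PiM {..<k} (\<lambda>_. P)) E - measure (PiM {..<k} (\<lambda>_. U)) E\<bar> \<le> c ^ k - 1"
proof -
  have sets_eq: "sets (PiM {..<k} (\<lambda>_. P)) = sets (PiM {..<k} (\<lambda>_. U))"
    by (rule sets_PiM_cong) (auto simp: P)
  interpret PP: prob_space "PiM {..<k} (\<lambda>_. P)" by (rule prob_space_PiM) (rule pP)
  interpret UU: prob_space "PiM {..<k} (\<lambda>_. U)" by (rule prob_space_PiM) (rule pU)
  have ck: "c ^ k \<ge> 1" using c by simp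
  show ?thesis
  proof (cases "E \<in> sets (PiM {..<k} (\<lambda>_. U))")
    case True
    then have E2: "E \<in> sets (PiM {..<k} (\<lambda>_. P))" using sets_eq by simp
    have c0: "c \<ge> 0" using c by simp
    have "emeasure (PiM {..<k} (\<lambda>_. density U g)) E \<le> ennreal (c ^ card {..<k}) * emeasure (PiM {..<k} (\<lambda>_. U)) E"
      by (rule PiM_density_le[OF _ pU _ g gc c0 True]) (use pP P in auto)
    then have "ennreal (measure (PiM {..<k} (\<lambda>_. P)) E) \<le> ennreal (c ^ k * measure (PiM {..<k} (\<lambda>_. U)) E)"
      using c0 by (simp add: P[symmetric] PP.emeasure_eq_measure UU.emeasure_eq_measure ennreal_mult)
    then have a1: "measure (PiM {..<k} (\<lambda>_. P)) E \<le> c ^ k * measure (PiM {..<k} (\<lambda>_. U)) E"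
      using c0 by (simp add: ennreal_le_iff)
    have "emeasure (PiM {..<k} (\<lambda>_. density P g2)) E \<le> ennreal (c ^ card {..<k}) * emeasure (PiM {..<k} (\<lambda>_. P)) E"
      by (rule PiM_density_le[OF _ pP _ g2 g2c c0 E2]) (use pU U in auto)
    then have "ennreal (measure (PiM {..<k} (\<lambda>_. U)) E) \<le> ennreal (c ^ k * measure (PiM {..<k} (\<lambda>_. P)) E)"
      using c0 by (simp add: U[symmetric] PP.emeasure_eq_measure UU.emeasure_eq_measure ennreal_mult)
    then have a2: "measure (PiM {..<k} (\<lambda>_. U)) E \<le> c ^ k * measure (PiM {..<k} (\<lambda>_. P)) E"
      using c0 by (simp add: ennreal_le_iff)
    have b1: "measure (PiM {..<k} (\<lambda>_. U)) E \<le> 1" "measure (PiM {..<k} (\<lambda>_. P)) E \<le> 1"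
      by (auto intro: UU.prob_le_1 PP.prob_le_1)
    have "(c^k - 1) * measure (PiM {..<k} (\<lambda>_. U)) E \<le> (c^k - 1) * 1"
      using b1 ck by (intro mult_left_mono) auto
    moreover have "(c^k - 1) * measure (PiM {..<k} (\<lambda>_. P)) E \<le> (c^k - 1) * 1"
      using b1 ck by (intro mult_left_mono) auto
    ultimately show ?thesis using a1 a2 by (auto simp: algebra_simps abs_le_iff)
  next
    case False
    then have "E \<notin> sets (PiM {..<k} (\<lambda>_. P))" using sets_eq by simp
    then show ?thesis using False ck by (simp add: measure_notin_sets)
  qed
qed

lemma local_compare:
  fixes f :: "'a::euclidean_space \<Rightarrow> real" and x :: 'a and k :: nat
  assumes fm[measurable]: "f \<in> borel_measurable borel" and f0: "\<And>y. f y \<ge> 0"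
    and r: "r > 0" and d: "0 < \<delta>" "\<delta> < 1" and fx: "f x > 0"
    and near: "\<And>y. y \<in> ball x (2*r) \<Longrightarrow> \<bar>f y - f x\<bar> \<le> \<delta> * f x"
  shows "\<bar>pk_xr (density lborel (\<lambda>y. ennreal (f y))) x r k - pk k TYPE('a)\<bar> \<le> ((1+\<delta>)/(1-\<delta>))^k - 1"
proof -
  define B where "B = ball x (2*r)"
  define mu where "mu = density lborel (\<lambda>y. ennreal (f y))"
  define V where "V = measure lborel B"
  define c where "c = (1+\<delta>)/(1-\<delta>)"
  have Bm[measurable]: "B \<in> sets borel" unfolding B_def by simp
  have r2: "2*r > 0" using r by simp
  have V0: "V > 0" unfolding V_def B_def using content_ball_pos[OF r2] by simp
  have eV: "emeasure lborel B = ennreal V"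
    unfolding V_def B_def using emeasure_lborel_ball_finite[of x "2*r"] by (simp add: emeasure_eq_ennreal_measure)
  have fup: "f y \<le> (1+\<delta>) * f x" if "y \<in> B" for y using near[of y] that unfolding B_def by (auto simp: algebra_simps abs_le_iff)
  have flo: "(1-\<delta>) * f x \<le> f y" if "y \<in> B" for y using near[of y] that unfolding B_def by (auto simp: algebra_simps abs_le_iff)
  have fpos: "f y > 0" if "y \<in> B" for y
  proof -
    have "(1-\<delta>) * f x > 0" using d fx by simp
    then show ?thesis using flo[OF that] by linarith
  qed
  have emu: "emeasure mu B = (\<integral>\<^sup>+y. ennreal (f y) * indicator B y \<partial>lborel)"
    unfolding mu_def by (simp add: emeasure_density)
  have "emeasure mu B \<le> (\<integral>\<^sup>+y. ennreal ((1+\<delta>) * f x) * indicator B y \<partial>lborel)"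
    unfolding emu by (rule nn_integral_mono) (auto simp: indicator_def fup intro!: ennreal_leI)
  also have "\<dots> = ennreal ((1+\<delta>) * f x * V)"
    using d fx V0 by (simp add: nn_integral_cmult_indicator eV ennreal_mult)
  finally have Zup': "emeasure mu B \<le> ennreal ((1+\<delta>) * f x * V)" .
  have "ennreal ((1-\<delta>) * f x * V) = (\<integral>\<^sup>+y. ennreal ((1-\<delta>) * f x) * indicator B y \<partial>lborel)"
    using d fx V0 by (simp add: nn_integral_cmult_indicator eV ennreal_mult)
  also have "\<dots> \<le> emeasure mu B"
    unfolding emu by (rule nn_integral_mono) (auto simp: indicator_def flo intro!: ennreal_leI)
  finally have Zlo': "ennreal ((1-\<delta>) * f x * V) \<le> emeasure mu B" .
  define Z where "Z = measure mu B"
  have fin: "emeasure mu B \<noteq> \<infinity>" using Zup' by (auto simp: top_unique)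
  have eZ: "emeasure mu B = ennreal Z" unfolding Z_def using fin by (simp add: emeasure_eq_ennreal_measure)
  have lo0: "(1-\<delta>) * f x * V > 0" using d fx V0 by simp
  have Zlo: "(1-\<delta>) * f x * V \<le> Z" using Zlo' lo0 unfolding eZ by (simp add: ennreal_le_iff2)
  have Zup: "Z \<le> (1+\<delta>) * f x * V" using Zup' d fx V0 unfolding eZ by (simp add: ennreal_le_iff)
  have Z0: "Z > 0" using Zlo lo0 by linarith
  define P where "P = uniform_measure mu B"
  define U where "U = uniform_measure lborel B"
  define g where "g = (\<lambda>y. ennreal (f y * V / Z * indicator B y))"
  define g2 where "g2 = (\<lambda>y. ennreal (Z / (f y * V) * indicator B y))"
  have gm[measurable]: "g \<in> borel_measurable borel" unfolding g_def by measurable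
  have g2m[measurable]: "g2 \<in> borel_measurable borel" unfolding g2_def by measurable
  have pU: "prob_space U" unfolding U_def B_def by (rule prob_space_uniform_ball[OF r2])
  have pP: "prob_space P" unfolding P_def using eZ Z0 by (intro prob_space_uniform_measure) auto
  have Uden: "U = density lborel (\<lambda>y. ennreal (indicator B y / V))"
    unfolding U_def uniform_measure_def eV
    by (intro density_cong) (auto simp: ennreal_indicator[symmetric] divide_ennreal V0 intro: AE_I2)
  have Pden: "P = density lborel (\<lambda>y. ennreal (f y * indicator B y / Z))"
  proof -
    have "P = density lborel (\<lambda>y. ennreal (f y) * (indicator B y / ennreal Z))"
      unfolding P_def uniform_measure_def eZ unfolding mu_def by (subst density_density_eq) auto
    also have "\<dots> = density lborel (\<lambda>y. ennreal (f y * indicator B y / Z))"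
      by (intro density_cong) (auto simp: ennreal_indicator[symmetric] divide_ennreal Z0 ennreal_mult'[symmetric] f0 intro: AE_I2)
    finally show ?thesis .
  qed
  have P_eq: "P = density U g"
  proof -
    have "density U g = density lborel (\<lambda>y. ennreal (indicator B y / V) * g y)"
      unfolding Uden g_def by (subst density_density_eq) auto
    also have "\<dots> = density lborel (\<lambda>y. ennreal (f y * indicator B y / Z))"
    proof (intro density_cong AE_I2)
      fix y
      have "indicator B y / V * (f y * V / Z * indicator B y) = f y * indicator B y / Z"
        using V0 by (auto simp: indicator_def)
      moreover have "ennreal (indicator B y / V) * g y = ennreal (indicator B y / V * (f y * V / Z * indicator B y))"
        unfolding g_def using V0 by (subst ennreal_mult') auto
      ultimately show "ennreal (indicator B y / V) * g y = ennreal (f y * indicator B y / Z)"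
        by (simp only:)
    qed (auto simp: gm)
    finally show ?thesis using Pden by simp
  qed
  have U_eq: "U = density P g2"
  proof -
    have "density P g2 = density lborel (\<lambda>y. ennreal (f y * indicator B y / Z) * g2 y)"
      unfolding Pden g2_def by (subst density_density_eq) auto
    also have "\<dots> = density lborel (\<lambda>y. ennreal (indicator B y / V))"
    proof (intro density_cong AE_I2)
      fix y
      have "f y * indicator B y / Z * (Z / (f y * V) * indicator B y) = indicator B y / V"
        using V0 Z0 fpos[of y] by (auto simp: indicator_def)
      moreover have "ennreal (f y * indicator B y / Z) * g2 y = ennreal (f y * indicator B y / Z * (Z / (f y * V) * indicator B y))"
        unfolding g2_def using Z0 f0[of y] by (subst ennreal_mult') auto
      ultimately show "ennreal (f y * indicator B y / Z) * g2 y = ennreal (indicator B y / V)"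
        by (simp only:)
    qed (auto simp: g2m)
    finally show ?thesis using Uden by simp
  qed
  have c1: "c \<ge> 1" unfolding c_def using d by (simp add: field_simps)
  have gc: "g y \<le> ennreal c" for y
  proof (cases "y \<in> B")
    case True
    have "f y * V * (1-\<delta>) \<le> (1+\<delta>) * f x * V * (1-\<delta>)"
      using fup[OF True] V0 d by (intro mult_right_mono) auto
    also have "\<dots> = (1+\<delta>) * ((1-\<delta>) * f x * V)" by (simp add: algebra_simps)
    also have "\<dots> \<le> (1+\<delta>) * Z"
      using Zlo d by (intro mult_left_mono) auto
    finally have "f y * V / Z \<le> c" unfolding c_def using Z0 d by (simp add: field_simps)
    then show ?thesis unfolding g_def using True by (simp add: ennreal_leI)
  next
    case False then show ?thesis unfolding g_def by simp
  qed
  have g2c: "g2 y \<le> ennreal c" for y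
  proof (cases "y \<in> B")
    case True
    have "Z * (1-\<delta>) \<le> (1+\<delta>) * f x * V * (1-\<delta>)"
      using Zup d by (intro mult_right_mono) auto
    also have "\<dots> = (1+\<delta>) * V * ((1-\<delta>) * f x)" by (simp add: algebra_simps)
    also have "\<dots> \<le> (1+\<delta>) * V * f y"
      using flo[OF True] d V0 by (intro mult_left_mono) auto
    finally have "Z / (f y * V) \<le> c" unfolding c_def using fpos[OF True] V0 d by (simp add: field_simps)
    then show ?thesis unfolding g2_def using True by (simp add: ennreal_leI)
  next
    case False then show ?thesis unfolding g2_def by simp
  qed
  have cmp: "\<bar>measure (PiM {..<k} (\<lambda>_. P)) E - measure (PiM {..<k} (\<lambda>_. U)) E\<bar> \<le> c ^ k - 1" for E
    by (rule compare_PiM[OF pP pU P_eq U_eq _ _ gc g2c c1]) (auto simp: g_def g2_def P_def U_def mu_def)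
  have spc: "space (PiM {..<k} (\<lambda>_. P)) = space (PiM {..<k} (\<lambda>_. U))"
    by (simp add: space_PiM P_def U_def mu_def)
  have "pk_xr mu x r k = measure (PiM {..<k} (\<lambda>_. P)) {ys \<in> space (PiM {..<k} (\<lambda>_. U)). voronoi_cell x (ys ` {..<k}) \<subseteq> ball x r}"
    unfolding pk_xr_def P_def B_def spc[unfolded P_def B_def U_def] U_def ..
  moreover have "measure (PiM {..<k} (\<lambda>_. U)) {ys \<in> space (PiM {..<k} (\<lambda>_. U)). voronoi_cell x (ys ` {..<k}) \<subseteq> ball x r} = pk k TYPE('a)"
    unfolding U_def B_def by (rule pk_uniform[OF r])
  ultimately have "\<bar>pk_xr mu x r k - pk k TYPE('a)\<bar> \<le> c ^ k - 1"
    using cmp[of "{ys \<in> space (PiM {..<k} (\<lambda>_. U)). voronoi_cell x (ys ` {..<k}) \<subseteq> ball x r}"]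
    by (simp only:)
  then show ?thesis unfolding mu_def c_def .
qed

theorem lemma3p12:
  fixes f :: "'a::euclidean_space \<Rightarrow> real" and mu :: "'a measure"
    and W :: "'a set" and x :: 'a and k :: nat
  assumes "continuous_on UNIV f"
    and "\<And>y. f y \<ge> 0"
    and "mu = density lborel (\<lambda>y. ennreal (f y))"
    and "compact W" and "convex W"
    and "\<And>y. y \<in> W \<Longrightarrow> f y > 0"
    and "k \<ge> DIM('a) + 1"
    and "x \<in> W"
  shows "((\<lambda>r. pk_xr mu x r k) \<longlongrightarrow> pk k TYPE('a)) (at_right 0)"
proof (rule tendstoI)
  fix \<epsilon> :: real assume e: "\<epsilon> > 0"
  have fm: "f \<in> borel_measurable borel" by (rule borel_measurable_continuous_onI[OF assms(1)])
  have fx: "f x > 0" using assms(6,8) by simp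
  have lim: "((\<lambda>\<delta>::real. ((1+\<delta>)/(1-\<delta>))^k) \<longlongrightarrow> ((1+0)/(1-0))^k) (at_right 0)"
    by (intro tendsto_intros) auto
  then have "eventually (\<lambda>\<delta>. ((1+\<delta>)/(1-\<delta>))^k < 1 + \<epsilon>) (at_right (0::real))"
    using e by (intro order_tendstoD(2)) auto
  then obtain b where b: "b > 0" "\<And>\<delta>. \<delta> > 0 \<Longrightarrow> \<delta> < b \<Longrightarrow> ((1+\<delta>)/(1-\<delta>))^k < 1 + \<epsilon>"
    unfolding eventually_at_right_field by auto
  define \<delta> where "\<delta> = min (b/2) (1/2)"
  have d: "0 < \<delta>" "\<delta> < 1" "\<delta> < b" using b(1) by (auto simp: \<delta>_def)
  have dk: "((1+\<delta>)/(1-\<delta>))^k - 1 < \<epsilon>" using b(2)[OF d(1) d(3)] by simp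
  have "isCont f x" using assms(1) by (simp add: continuous_on_eq_continuous_at)
  then obtain \<eta> where eta: "\<eta> > 0" "\<And>y. dist y x < \<eta> \<Longrightarrow> dist (f y) (f x) < \<delta> * f x"
    unfolding continuous_at_eps_delta using d fx by (metis mult_pos_pos)
  show "eventually (\<lambda>r. dist (pk_xr mu x r k) (pk k TYPE('a)) < \<epsilon>) (at_right 0)"
    unfolding eventually_at_right_field
  proof (intro exI[of _ "\<eta>/2"] conjI allI impI)
    show "\<eta>/2 > 0" using eta by simp
    fix r :: real assume r: "r > 0" "r < \<eta>/2"
    have near: "\<bar>f y - f x\<bar> \<le> \<delta> * f x" if "y \<in> ball x (2*r)" for y
    proof -
      have "dist y x < \<eta>" using that r by (simp add: dist_commute)
      then show ?thesis using eta(2)[of y] by (simp add: dist_real_def)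
    qed
    have "\<bar>pk_xr mu x r k - pk k TYPE('a)\<bar> \<le> ((1+\<delta>)/(1-\<delta>))^k - 1"
      unfolding assms(3) by (rule local_compare[OF fm assms(2) r(1) d(1) d(2) fx near])
    then show "dist (pk_xr mu x r k) (pk k TYPE('a)) < \<epsilon>"
      using dk by (simp add: dist_real_def)
  qed
qed

end
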